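(* For every positive integer $n$: (1) the accessible subset-construction determinization of the underlying automaton of $\mathcal{T}_n$ has exactly $3$ states; (2) the accessible subset-construction determinization of the reversed underlying automaton of $\mathcal{T}_n$ has exactly $2^n+n$ states.
   Context: Let $\Sigma_n=\{a_1,\dots,a_n\}$, output monoid the free monoid $\{1\}^*$. $\mathcal{T}_n=\langle\Sigma_n^*\times\{1\}^*,Q,\{s\},\{f\},\Delta_n\rangle$ with $Q=\{s,q_1,\dots,q_n,f\}$ and $\Delta_n=\Delta_{s,n}\cup\Delta_{Q_n}\cup\Delta_{f,n}$ where: $\Delta_{s,n}=\{\langle s,\langle a_j,1^{i-1}\rangle,q_i\rangle:1\le i,j\le n\}$; $\Delta_{Q_n}$ consists, for all $1\le i,j\le n$, of $\langle q_i,\langle a_j,1^n\rangle,q_i\rangle$ if $i\notin\{1,j\}$, $\langle q_1,\langle a_j,1^{n+j-1}\rangle,q_j\rangle$ if $i=1$, and $\langle q_j,\langle a_j,1^{n-j+1}\rangle,q_1\rangle$ if $i=j\neq1$; $\Delta_{f,n}=\{\langle q_i,\langle a_j,1^{2n-i+1}\rangle,f\rangle:1\le j\le i\le n\}$. The underlying automaton of $\mathcal{T}_n$ is the nondeterministic automaton over $\Sigma_n$ with states $Q$, initial state $s$, final state $f$ and a transition $\langle p,a,q\rangle$ for each $\langle p,\langle a,w\rangle,q\rangle\in\Delta_n$; the reversed underlying automaton has initial state $f$, final state $s$ and all transitions reversed. The accessible subset-construction determinization has as states exactly the subsets reachable from the set of initial states via $\delta(P,a)=\{q:\exists p\in P\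 \langle p,a,q\rangle\}$. *)

theory Defs
  imports Main
begin

text \<open>States of T_n: s, q_i (1 <= i <= n), f. Letters a_j are encoded as j (1 <= j <= n).
Output words in {1}^* are lists over the one-letter alphabet, encoded as nat lists of 1s.\<close>

datatype st = S | Q nat | F

definition alphabet :: "nat \<Rightarrow> nat set" where
  "alphabet n = {1..n}"

definition Delta_s :: "nat \<Rightarrow> (st \<times> (nat \<times> nat list) \<times> st) set" where
  "Delta_s n = {(S, (j, replicate (i - 1) 1), Q i) | i j. 1 \<le> i \<and> i \<le> n \<and> 1 \<le> j \<and> j \<le> n}"

definition Delta_Q :: "nat \<Rightarrow> (st \<times> (nat \<times> nat list) \<times> st) set" where
  "Delta_Q n =
     {(Q i, (j, replicate n 1), Q i) | i j. 1 \<le> i \<and> i \<le> n \<and> 1 \<le> j \<and> j \<le> n \<and> i \<notin> {1, j}}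
   \<union> {(Q 1, (j, replicate (n + j - 1) 1), Q j) | j. 1 \<le> j \<and> j \<le> n}
   \<union> {(Q j, (j, replicate (n - j + 1) 1), Q 1) | j. 1 \<le> j \<and> j \<le> n \<and> j \<noteq> 1}"

definition Delta_f :: "nat \<Rightarrow> (st \<times> (nat \<times> nat list) \<times> st) set" where
  "Delta_f n = {(Q i, (j, replicate (2 * n - i + 1) 1), F) | i j. 1 \<le> j \<and> j \<le> i \<and> i \<le> n}"

definition Delta :: "nat \<Rightarrow> (st \<times> (nat \<times> nat list) \<times> st) set" where
  "Delta n = Delta_s n \<union> Delta_Q n \<union> Delta_f n"

text \<open>Underlying automaton (initial S, final F) and its reversal (initial F, final S).\<close>

definition under_trans :: "nat \<Rightarrow> (st \<times> nat \<times> st) set" where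
  "under_trans n = {(p, a, q) | p a w q. (p, (a, w), q) \<in> Delta n}"

definition rev_trans :: "nat \<Rightarrow> (st \<times> nat \<times> st) set" where
  "rev_trans n = {(q, a, p) | p a q. (p, a, q) \<in> under_trans n}"

definition subset_step :: "('q \<times> 'a \<times> 'q) set \<Rightarrow> 'q set \<Rightarrow> 'a \<Rightarrow> 'q set" where
  "subset_step T P a = {q. \<exists>p\<in>P. (p, a, q) \<in> T}"

inductive_set det_states :: "('q \<times> 'a \<times> 'q) set \<Rightarrow> 'a set \<Rightarrow> 'q set \<Rightarrow> 'q set set"
  for T :: "('q \<times> 'a \<times> 'q) set" and \<Sigma> :: "'a set" and I :: "'q set" where
  init: "I \<in> det_states T \<Sigma> I"
| step: "P \<in> det_states T \<Sigma> I \<Longrightarrow> a \<in> \<Sigma> \<Longrightarrow> subset_step T P a \<in> det_states T \<Sigma> I"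

end

theory Submission imports Defs begin
lemma ut: "(p,a,q) \<in> under_trans n \<longleftrightarrow> 1 \<le> a \<and> a \<le> n \<and>
  ((p = S \<and> (\<exists>i. q = Q i \<and> 1 \<le> i \<and> i \<le> n))
  \<or> (\<exists>i. p = Q i \<and> q = Q i \<and> 1 \<le> i \<and> i \<le> n \<and> i \<noteq> 1 \<and> i \<noteq> a)
  \<or> (p = Q 1 \<and> q = Q a)
  \<or> (p = Q a \<and> q = Q 1 \<and> a \<noteq> 1)
  \<or> (\<exists>i. p = Q i \<and> q = F \<and> a \<le> i \<and> i \<le> n))" (is "?L = ?R")
proof
  assume ?L
  then obtain w where "(p,(a,w),q) \<in> Delta_s n \<or> (p,(a,w),q) \<in> Delta_Q n \<or> (p,(a,w),q) \<in> Delta_f n"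
    unfolding under_trans_def Delta_def by blast
  moreover have ?R if "(p,(a,w),q) \<in> Delta_s n"
    using that unfolding Delta_s_def by blast
  moreover have ?R if "(p,(a,w),q) \<in> Delta_Q n"
    using that unfolding Delta_Q_def by blast
  moreover have ?R if "(p,(a,w),q) \<in> Delta_f n"
    using that unfolding Delta_f_def by fastforce
  ultimately show ?R by blast
next
  assume r: ?R
  have d: "(p,(a, w),q) \<in> Delta n \<Longrightarrow> ?L" for w
    unfolding under_trans_def by blast
  have c1: "?L" if "p = S" "q = Q i" "1 \<le> i" "i \<le> n" for i
    using r that by (intro d[of "replicate (i - 1) 1"]) (auto simp: Delta_def Delta_s_def)
  have c2: "?L" if "p = Q i" "q = Q i" "1 \<le> i" "i \<le> n" "i \<noteq> 1" "i \<noteq> a" for i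
    using r that by (intro d[of "replicate n 1"]) (auto simp: Delta_def Delta_Q_def)
  have c3: "?L" if "p = Q 1" "q = Q a"
    using r that by (intro d[of "replicate (n + a - 1) 1"]) (auto simp: Delta_def Delta_Q_def)
  have c4: "?L" if "p = Q a" "q = Q 1" "a \<noteq> 1"
    using r that by (intro d[of "replicate (n - a + 1) 1"]) (auto simp: Delta_def Delta_Q_def)
  have c5: "?L" if "p = Q i" "q = F" "a \<le> i" "i \<le> n" for i
    using r that by (intro d[of "replicate (2 * n - i + 1) 1"]) (auto simp: Delta_def Delta_f_def)
  show ?L using r c1 c2 c3 c4 c5 by blast
qed

lemma rt: "(p,a,q) \<in> rev_trans n \<longleftrightarrow> (q,a,p) \<in> under_trans n"
  unfolding rev_trans_def by blast

definition "AA n = Q ` {1..n}"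

definition fs :: "nat \<Rightarrow> nat \<Rightarrow> nat" where
  "fs a x = (if x = 1 then a else if x = a then 1 else x)"

lemma fs_fs: "fs a (fs a x) = x"
  by (simp add: fs_def)

lemma fs_sub: "a \<in> {1..n} \<Longrightarrow> X \<subseteq> {1..n} \<Longrightarrow> fs a ` X \<subseteq> {1..n}"
  by (auto simp: fs_def)

lemma fs_all: assumes "a \<in> {1..n}" shows "fs a ` {1..n} = {1..n}"
proof
  show "fs a ` {1..n} \<subseteq> {1..n}" using fs_sub[OF assms] by simp
  show "{1..n} \<subseteq> fs a ` {1..n}"
  proof
    fix x assume x: "x \<in> {1..n}"
    have "fs a x \<in> {1..n}" using fs_sub[OF assms, of "{x}"] x by simp
    then show "x \<in> fs a ` {1..n}" using fs_fs[of a x] by (metis image_eqI)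
  qed
qed

lemma utS: "(S,a,q) \<in> under_trans n \<longleftrightarrow> 1 \<le> a \<and> a \<le> n \<and> q \<in> Q ` {1..n}"
  by (auto simp: ut)

lemma utF: "(F,a,q) \<notin> under_trans n"
  by (simp add: ut)

lemma utQ: assumes "1 \<le> a" "a \<le> n" "1 \<le> i" "i \<le> n"
  shows "(Q i,a,q) \<in> under_trans n \<longleftrightarrow> q = Q (fs a i) \<or> (q = F \<and> a \<le> i)"
  using assms by (cases q) (auto simp: ut fs_def)

lemma utQ': "(Q i,a,q) \<in> under_trans n \<Longrightarrow> 1 \<le> i \<and> i \<le> n"
  by (auto simp: ut)

lemma toF: "(q,a,F) \<in> under_trans n \<longleftrightarrow> 1 \<le> a \<and> a \<le> n \<and> (\<exists>i. q = Q i \<and> a \<le> i \<and> i \<le> n)"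
  by (cases q) (auto simp: ut)

lemma toQ: assumes "1 \<le> a" "a \<le> n" "1 \<le> i" "i \<le> n"
  shows "(q,a,Q i) \<in> under_trans n \<longleftrightarrow> q = S \<or> q = Q (fs a i)"
  using assms by (cases q) (auto simp: ut fs_def)

lemma toS: "(q,a,S) \<notin> under_trans n"
  by (cases q) (auto simp: ut)

lemma f1: "a \<in> alphabet n \<Longrightarrow> subset_step (under_trans n) {S} a = AA n"
  by (simp add: subset_step_def utS alphabet_def AA_def)

lemma stepAA: assumes "a \<in> alphabet n"
  shows "subset_step (under_trans n) (AA n) a = insert F (Q ` fs a ` {1..n})"
proof -
  have a: "1 \<le> a" "a \<le> n" using assms by (auto simp: alphabet_def)
  show ?thesis
  proof (rule set_eqI)
    fix q
    have "q \<in> subset_step (under_trans n) (AA n) a \<longleftrightarrow> (\<exists>i\<in>{1..n}. (Q i,a,q) \<in> under_trans n)"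
      by (auto simp: subset_step_def AA_def)
    also have "\<dots> \<longleftrightarrow> (\<exists>i\<in>{1..n}. q = Q (fs a i) \<or> (q = F \<and> a \<le> i))"
      using utQ[OF a] by auto
    also have "\<dots> \<longleftrightarrow> q \<in> insert F (Q ` fs a ` {1..n})"
      using a by auto
    finally show "q \<in> subset_step (under_trans n) (AA n) a \<longleftrightarrow> q \<in> insert F (Q ` fs a ` {1..n})" .
  qed
qed

lemma f2: assumes "a \<in> alphabet n" shows "subset_step (under_trans n) (AA n) a = insert F (AA n)"
  using stepAA[OF assms] fs_all[of a n] assms by (simp add: alphabet_def AA_def)

lemma f3: assumes "a \<in> alphabet n" shows "subset_step (under_trans n) (insert F (AA n)) a = insert F (AA n)"
proof -
  have "subset_step (under_trans n) (insert F (AA n)) a = subset_step (under_trans n) (AA n) a"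
    using utF by (auto simp: subset_step_def)
  then show ?thesis using f2[OF assms] by simp
qed

lemma r1: "a \<in> alphabet n \<Longrightarrow> subset_step (rev_trans n) {F} a = Q ` {a..n}"
  by (auto simp: subset_step_def rt toF alphabet_def)

lemma r2: assumes "a \<in> alphabet n" "X \<subseteq> {1..n}" "X \<noteq> {}"
  shows "subset_step (rev_trans n) (Q ` X) a = insert S (Q ` fs a ` X)"
proof -
  have a: "1 \<le> a" "a \<le> n" using assms by (auto simp: alphabet_def)
  show ?thesis
  proof (rule set_eqI)
    fix q
    have "q \<in> subset_step (rev_trans n) (Q ` X) a \<longleftrightarrow> (\<exists>i\<in>X. (q,a,Q i) \<in> under_trans n)"
      by (auto simp: subset_step_def rt)
    also have "\<dots> \<longleftrightarrow> (\<exists>i\<in>X. q = S \<or> q = Q (fs a i))"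
      using toQ[OF a] assms(2) by (meson atLeastAtMost_iff subsetD)
    also have "\<dots> \<longleftrightarrow> q \<in> insert S (Q ` fs a ` X)"
      using assms(3) by auto
    finally show "q \<in> subset_step (rev_trans n) (Q ` X) a \<longleftrightarrow> q \<in> insert S (Q ` fs a ` X)" .
  qed
qed

lemma r3: assumes "a \<in> alphabet n" "X \<subseteq> {1..n}" "X \<noteq> {}"
  shows "subset_step (rev_trans n) (insert S (Q ` X)) a = insert S (Q ` fs a ` X)"
proof -
  have "subset_step (rev_trans n) (insert S (Q ` X)) a = subset_step (rev_trans n) (Q ` X) a"
    using toS by (auto simp: subset_step_def rt)
  then show ?thesis using r2[OF assms] by simp
qed

lemma fwd_states:
  assumes "1 \<le> n"
  shows "det_states (under_trans n) (alphabet n) {S} = {{S}, AA n, insert F (AA n)}"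
proof
  show "det_states (under_trans n) (alphabet n) {S} \<subseteq> {{S}, AA n, insert F (AA n)}"
  proof
    fix P assume "P \<in> det_states (under_trans n) (alphabet n) {S}"
    then show "P \<in> {{S}, AA n, insert F (AA n)}"
      by induction (auto simp: f1 f2 f3)
  qed
next
  have "1 \<in> alphabet n" using assms by (simp add: alphabet_def)
  then have a: "AA n \<in> det_states (under_trans n) (alphabet n) {S}"
    using det_states.step[OF det_states.init, of 1 "alphabet n" "under_trans n"] f1 by metis
  then have b: "insert F (AA n) \<in> det_states (under_trans n) (alphabet n) {S}"
    using det_states.step[OF a \<open>1 \<in> alphabet n\<close>] f2 \<open>1 \<in> alphabet n\<close> by metis
  show "{{S}, AA n, insert F (AA n)} \<subseteq> det_states (under_trans n) (alphabet n) {S}"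
    using a b det_states.init by blast
qed

lemma fwd_card:
  assumes "1 \<le> n"
  shows "card (det_states (under_trans n) (alphabet n) {S}) = 3"
proof -
  have "Q 1 \<in> AA n" using assms by (simp add: AA_def)
  moreover have "S \<notin> AA n" "F \<notin> AA n" by (auto simp: AA_def)
  ultimately have "{S} \<noteq> AA n" "{S} \<noteq> insert F (AA n)" "AA n \<noteq> insert F (AA n)" by auto
  then show ?thesis using fwd_states[OF assms] by simp
qed

definition "VV n = (\<lambda>X. insert S (Q ` X)) ` (Pow {1..n} - {{}})"
definition "UU n = (\<lambda>j. Q ` {j..n}) ` {1..n}"

lemma rev_sub:
  assumes "P \<in> det_states (rev_trans n) (alphabet n) {F}"
  shows "P \<in> {{F}} \<union> UU n \<union> VV n"
  using assms
proof induction
  case init then show ?case by simp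
next
  case (step P a)
  have a: "a \<in> {1..n}" using step.hyps(2) by (simp add: alphabet_def)
  from step.IH consider "P = {F}" | j where "j \<in> {1..n}" "P = Q ` {j..n}"
     | X where "X \<subseteq> {1..n}" "X \<noteq> {}" "P = insert S (Q ` X)"
    by (auto simp: UU_def VV_def)
  then show ?case
  proof cases
    case 1 then show ?thesis using r1[OF step.hyps(2)] a by (auto simp: UU_def)
  next
    case 2
    then have "{j..n} \<subseteq> {1..n}" "{j..n} \<noteq> {}" by auto
    then show ?thesis using 2 r2[OF step.hyps(2)] fs_sub[OF a] by (auto simp: VV_def)
  next
    case 3
    then show ?thesis using r3[OF step.hyps(2)] fs_sub[OF a] by (auto simp: VV_def)
  qed
qed

lemma fs_img:
  assumes "X \<in> {X. insert S (Q ` X) \<in> det_states (rev_trans n) (alphabet n) {F}}"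
    and "X \<subseteq> {1..n}" "X \<noteq> {}" "a \<in> {1..n}"
  shows "fs a ` X \<in> {X. insert S (Q ` X) \<in> det_states (rev_trans n) (alphabet n) {F}}"
proof -
  have "a \<in> alphabet n" using assms by (simp add: alphabet_def)
  have "subset_step (rev_trans n) (insert S (Q ` X)) a \<in> det_states (rev_trans n) (alphabet n) {F}"
    using det_states.step[OF _ \<open>a \<in> alphabet n\<close>] assms(1) by blast
  then show ?thesis using r3[OF \<open>a \<in> alphabet n\<close> assms(2,3)] by simp
qed

lemma exch:
  fixes n :: nat
  defines "R \<equiv> {X. insert S (Q ` X) \<in> det_states (rev_trans n) (alphabet n) {F}}"
  assumes "X \<in> R" "X \<subseteq> {1..n}" "a \<in> X" "b \<in> {1..n}" "b \<notin> X"
  shows "insert b (X - {a}) \<in> R"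
proof -
  have a: "a \<in> {1..n}" using assms by auto
  have ne: "X \<noteq> {}" using assms by auto
  consider "a = 1" | "b = 1" | "a \<noteq> 1" "b \<noteq> 1" by blast
  then show ?thesis
  proof cases
    case 1
    have "fs b ` X = insert b (X - {a})"
      using 1 assms(4,6) by (force simp: fs_def image_iff)
    then show ?thesis using fs_img[of X n b] assms unfolding R_def by auto
  next
    case 2
    have "fs a ` X = insert b (X - {a})"
      using 2 assms(4,6) by (force simp: fs_def image_iff)
    then show ?thesis using fs_img[of X n a] assms a unfolding R_def by auto
  next
    case 3
    have ab: "a \<noteq> b" using assms by auto
    have X1: "fs b ` X \<in> R" "fs b ` X \<subseteq> {1..n}" "fs b ` X \<noteq> {}"
      using fs_img[of X n b] fs_sub[of b n X] assms unfolding R_def by auto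
    have X2: "fs a ` fs b ` X \<in> R" "fs a ` fs b ` X \<subseteq> {1..n}" "fs a ` fs b ` X \<noteq> {}"
      using fs_img[of "fs b ` X" n a] fs_sub[of a n "fs b ` X"] X1 a unfolding R_def by auto
    have X3: "fs b ` fs a ` fs b ` X \<in> R"
      using fs_img[of "fs a ` fs b ` X" n b] X2 assms unfolding R_def by auto
    have g: "fs b (fs a (fs b x)) = (if x = a then b else if x = b then a else x)" for x
      using 3 ab by (simp add: fs_def)
    have "fs b ` fs a ` fs b ` X = (\<lambda>x. fs b (fs a (fs b x))) ` X"
      by (simp add: image_image)
    also have "\<dots> = insert b (X - {a})"
      unfolding g using assms(4,6) by (force simp: image_iff)
    finally show ?thesis using X3 by simp
  qed
qed

lemma reach:
  fixes n :: nat
  defines "R \<equiv> {X. insert S (Q ` X) \<in> det_states (rev_trans n) (alphabet n) {F}}"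
  shows "\<forall>X. card (X - {n + 1 - card X..n}) = d \<longrightarrow> X \<subseteq> {1..n} \<longrightarrow> X \<noteq> {} \<longrightarrow> X \<in> R"
proof (induction d rule: less_induct)
  case (less d)
  show ?case
  proof (intro allI impI)
    fix X assume d: "card (X - {n + 1 - card X..n}) = d" and X: "X \<subseteq> {1..n}" "X \<noteq> {}"
    define Y where "Y = {n + 1 - card X..n}"
    have fX: "finite X" using X finite_subset by blast
    have cX: "card X \<le> n" using card_mono[OF _ X(1)] by simp
    have cX1: "card X \<ge> 1" using fX X(2) by (simp add: Suc_le_eq card_gt_0_iff)
    have cY: "card Y = card X" unfolding Y_def using cX by simp
    have Ysub: "Y \<subseteq> {1..n}" unfolding Y_def using cX by auto
    have Yne: "Y \<noteq> {}" unfolding Y_def using cX cX1 by auto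
    show "X \<in> R"
    proof (cases "X = Y")
      case True
      have j: "n + 1 - card X \<in> alphabet n" using cX cX1 by (auto simp: alphabet_def)
      have "Q ` Y \<in> det_states (rev_trans n) (alphabet n) {F}"
        using det_states.step[OF det_states.init j] r1[OF j] unfolding Y_def by metis
      from det_states.step[OF this, of 1] r2[of 1 n Y] Ysub Yne cX1 cX
      have "insert S (Q ` fs 1 ` Y) \<in> det_states (rev_trans n) (alphabet n) {F}"
        by (simp add: alphabet_def)
      moreover have "fs 1 ` Y = Y" by (auto simp: fs_def)
      ultimately show ?thesis using True unfolding R_def by simp
    next
      case False
      have "\<not> X \<subseteq> Y"
        using False card_subset_eq[of Y X] cY by (metis Y_def finite_atLeastAtMost)
      then obtain a where a: "a \<in> X" "a \<notin> Y" by blast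
      have "\<not> Y \<subseteq> X"
        using False card_subset_eq[OF fX, of Y] cY by metis
      then obtain b where b: "b \<in> Y" "b \<notin> X" by blast
      define X' where "X' = insert b (X - {a})"
      have cX': "card X' = card X" unfolding X'_def using a b fX
        by (simp add: card_Diff_singleton) (metis One_nat_def Suc_pred card_gt_0_iff a(1) ex_in_conv)
      have "X' - Y = (X - Y) - {a}" unfolding X'_def using b by auto
      then have "card (X' - {n + 1 - card X'..n}) < d"
        using d a fX unfolding cX' Y_def[symmetric]
        by (metis Diff_iff card_Diff1_less finite_Diff)
      moreover have "X' \<subseteq> {1..n}" "X' \<noteq> {}" unfolding X'_def using X Ysub b by auto
      ultimately have "X' \<in> R" using less by blast
      moreover have "X = insert a (X' - {b})" unfolding X'_def using a b by auto
      moreover have "b \<in> X'" "a \<notin> X'" "a \<in> {1..n}" "X' \<subseteq> {1..n}"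
        unfolding X'_def using a b X Ysub by auto
      ultimately show "X \<in> R" using exch[of X' n b a] unfolding R_def by simp
    qed
  qed
qed

lemma rev_states:
  shows "det_states (rev_trans n) (alphabet n) {F} = {{F}} \<union> UU n \<union> VV n"
proof
  show "det_states (rev_trans n) (alphabet n) {F} \<subseteq> {{F}} \<union> UU n \<union> VV n"
    using rev_sub by blast
next
  have "UU n \<subseteq> det_states (rev_trans n) (alphabet n) {F}"
  proof
    fix P assume "P \<in> UU n"
    then obtain j where j: "j \<in> alphabet n" "P = Q ` {j..n}" by (auto simp: UU_def alphabet_def)
    then show "P \<in> det_states (rev_trans n) (alphabet n) {F}"
      using det_states.step[OF det_states.init j(1)] r1[OF j(1)] by metis
  qed
  moreover have "VV n \<subseteq> det_states (rev_trans n) (alphabet n) {F}"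
  proof
    fix P assume "P \<in> VV n"
    then obtain X where "X \<subseteq> {1..n}" "X \<noteq> {}" "P = insert S (Q ` X)" by (auto simp: VV_def)
    then show "P \<in> det_states (rev_trans n) (alphabet n) {F}"
      using reach[of n] by blast
  qed
  ultimately show "{{F}} \<union> UU n \<union> VV n \<subseteq> det_states (rev_trans n) (alphabet n) {F}"
    using det_states.init by blast
qed

lemma rev_card:
  shows "card (det_states (rev_trans n) (alphabet n) {F}) = 2 ^ n + n"
proof -
  have iQ: "inj Q" by (auto intro: injI)
  have injU: "inj_on (\<lambda>j. Q ` {j..n}) {1..n}"
  proof (rule inj_onI)
    fix i j assume ij: "i \<in> {1..n}" "j \<in> {1..n}" "Q ` {i..n} = Q ` {j..n}"
    then have "{i..n} = {j..n}" by (simp add: inj_image_eq_iff[OF iQ])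
    then show "i = j" using ij by (auto simp: Icc_eq_Icc)
  qed
  have injV: "inj_on (\<lambda>X. insert S (Q ` X)) (Pow {1..n} - {{}})"
  proof (rule inj_onI)
    fix X Y assume "insert S (Q ` X) = insert S (Q ` Y)"
    then have "Q ` X = Q ` Y" by (metis Diff_insert_absorb imageE st.distinct(1))
    then show "X = Y" by (simp add: inj_image_eq_iff[OF iQ])
  qed
  have cU: "card (UU n) = n" unfolding UU_def using card_image[OF injU] by simp
  have cP: "card (Pow {1..n::nat} - {{}}) = 2 ^ n - 1"
    by (simp add: card_Pow)
  have cV: "card (VV n) = 2 ^ n - 1" unfolding VV_def using card_image[OF injV] cP by simp
  have fU: "finite (UU n)" "finite (VV n)" by (auto simp: UU_def VV_def)
  have d1: "{{F}} \<inter> UU n = {}" by (auto simp: UU_def)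
  have d2: "({{F}} \<union> UU n) \<inter> VV n = {}" by (auto simp: UU_def VV_def)
  have "card ({{F}} \<union> UU n \<union> VV n) = 1 + n + (2 ^ n - 1)"
    using card_Un_disjoint[OF _ _ d2] card_Un_disjoint[OF _ _ d1] fU cU cV by simp
  also have "\<dots> = 2 ^ n + n" using one_le_power[of "2::nat" n] by simp
  finally show ?thesis using rev_states by simp
qed

theorem lemma11:
  fixes n :: nat
  assumes "1 \<le> n"
  shows "card (det_states (under_trans n) (alphabet n) {S}) = 3
       \<and> card (det_states (rev_trans n) (alphabet n) {F}) = 2 ^ n + n"
  using fwd_card[OF assms] rev_card by simp
end
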